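(* For every $n\in\mathbb{N}$, the set $ISD(\mathbb{R}^n)$, equipped with pointwise addition, pointwise multiplication, pointwise $\min$ (as $\wedge$) and pointwise $\max$ (as $\vee$), is an $f$-ring. In particular it is closed under pointwise sums and products.
   Context: $ISD(\mathbb{R}^n)$ is the smallest set of functions $\mathbb{R}^n \to \mathbb{R}$ containing all real polynomials in $n$ variables and closed under pointwise $\min$ and $\max$. An $\ell$-ring is a ring with identity (commutative addition) that is also a lattice with operations $\wedge,\vee$ (with $f\le g$ meaning $f\wedge g=f$) such that $f\le g$ implies $h+f\le h+g$ for all $h$, and $f,g\ge0$ implies $fg\ge0$. An $f$-ring is an $\ell$-ring such that whenever $f,g,h\ge0$ and $g\wedge h=0$, one has $fg\wedge h=0$ and $gf\wedge h=0$. *)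

theory Defs
  imports Complex_Main
begin

text \<open>Points of R^n are represented as maps nat => real, of which only the
  coordinates 0..n-1 are used.\<close>

inductive_set poly_fun :: "nat \<Rightarrow> ((nat \<Rightarrow> real) \<Rightarrow> real) set" for n :: nat where
  const: "(\<lambda>x. c) \<in> poly_fun n"
| var: "i < n \<Longrightarrow> (\<lambda>x. x i) \<in> poly_fun n"
| add: "p \<in> poly_fun n \<Longrightarrow> q \<in> poly_fun n \<Longrightarrow> (\<lambda>x. p x + q x) \<in> poly_fun n"
| mult: "p \<in> poly_fun n \<Longrightarrow> q \<in> poly_fun n \<Longrightarrow> (\<lambda>x. p x * q x) \<in> poly_fun n"

inductive_set ISD :: "nat \<Rightarrow> ((nat \<Rightarrow> real) \<Rightarrow> real) set" for n :: nat where
  poly: "p \<in> poly_fun n \<Longrightarrow> p \<in> ISD n"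
| min: "f \<in> ISD n \<Longrightarrow> g \<in> ISD n \<Longrightarrow> (\<lambda>x. min (f x) (g x)) \<in> ISD n"
| max: "f \<in> ISD n \<Longrightarrow> g \<in> ISD n \<Longrightarrow> (\<lambda>x. max (f x) (g x)) \<in> ISD n"

definition l_ring ::
  "'a set \<Rightarrow> ('a \<Rightarrow> 'a \<Rightarrow> 'a) \<Rightarrow> ('a \<Rightarrow> 'a \<Rightarrow> 'a) \<Rightarrow> 'a \<Rightarrow> 'a \<Rightarrow> ('a \<Rightarrow> 'a)
   \<Rightarrow> ('a \<Rightarrow> 'a \<Rightarrow> 'a) \<Rightarrow> ('a \<Rightarrow> 'a \<Rightarrow> 'a) \<Rightarrow> bool" where
  "l_ring S add mul zero one neg meet join \<longleftrightarrow>
     \<comment> \<open>closure\<close>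
     zero \<in> S \<and> one \<in> S \<and>
     (\<forall>f\<in>S. neg f \<in> S) \<and>
     (\<forall>f\<in>S. \<forall>g\<in>S. add f g \<in> S \<and> mul f g \<in> S \<and> meet f g \<in> S \<and> join f g \<in> S) \<and>
     \<comment> \<open>ring with identity\<close>
     (\<forall>f\<in>S. \<forall>g\<in>S. \<forall>h\<in>S. add (add f g) h = add f (add g h)) \<and>
     (\<forall>f\<in>S. \<forall>g\<in>S. add f g = add g f) \<and>
     (\<forall>f\<in>S. add zero f = f) \<and>
     (\<forall>f\<in>S. add (neg f) f = zero) \<and>
     (\<forall>f\<in>S. \<forall>g\<in>S. \<forall>h\<in>S. mul (mul f g) h = mul f (mul g h)) \<and>
     (\<forall>f\<in>S. mul one f = f \<and> mul f one = f) \<and>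
     (\<forall>f\<in>S. \<forall>g\<in>S. \<forall>h\<in>S. mul f (add g h) = add (mul f g) (mul f h)
                          \<and> mul (add f g) h = add (mul f h) (mul g h)) \<and>
     \<comment> \<open>lattice\<close>
     (\<forall>f\<in>S. \<forall>g\<in>S. meet f g = meet g f \<and> join f g = join g f) \<and>
     (\<forall>f\<in>S. \<forall>g\<in>S. \<forall>h\<in>S. meet (meet f g) h = meet f (meet g h)
                          \<and> join (join f g) h = join f (join g h)) \<and>
     (\<forall>f\<in>S. \<forall>g\<in>S. meet f (join f g) = f \<and> join f (meet f g) = f) \<and>
     \<comment> \<open>order f \<le> g iff meet f g = f; compatibility with + and positivity of products\<close>
     (\<forall>f\<in>S. \<forall>g\<in>S. \<forall>h\<in>S. meet f g = f \<longrightarrow> meet (add h f) (add h g) = add h f) \<and>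
     (\<forall>f\<in>S. \<forall>g\<in>S. meet zero f = zero \<and> meet zero g = zero \<longrightarrow> meet zero (mul f g) = zero)"

definition f_ring ::
  "'a set \<Rightarrow> ('a \<Rightarrow> 'a \<Rightarrow> 'a) \<Rightarrow> ('a \<Rightarrow> 'a \<Rightarrow> 'a) \<Rightarrow> 'a \<Rightarrow> 'a \<Rightarrow> ('a \<Rightarrow> 'a)
   \<Rightarrow> ('a \<Rightarrow> 'a \<Rightarrow> 'a) \<Rightarrow> ('a \<Rightarrow> 'a \<Rightarrow> 'a) \<Rightarrow> bool" where
  "f_ring S add mul zero one neg meet join \<longleftrightarrow>
     l_ring S add mul zero one neg meet join \<and>
     (\<forall>f\<in>S. \<forall>g\<in>S. \<forall>h\<in>S.
        meet zero f = zero \<and> meet zero g = zero \<and> meet zero h = zero \<and> meet g h = zero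
        \<longrightarrow> meet (mul f g) h = zero \<and> meet (mul g f) h = zero)"

end

theory Submission
  imports Defs
begin

lemma mm_le: fixes p c d :: real
  assumes "p \<ge> 0" shows "min (p*c) (p*d) = p * min c d" "max (p*c) (p*d) = p * max c d"
  using assms mult_left_mono[of c d p] mult_left_mono[of d c p] by (auto simp: min_def max_def)
lemma mm_ge: fixes p c d :: real
  assumes "\<not> p \<ge> 0" shows "max (p*c) (p*d) = p * min c d" "min (p*c) (p*d) = p * max c d"
  using assms mult_left_mono_neg[of c d p] mult_left_mono_neg[of d c p] by (auto simp: min_def max_def)

lemma h1: "min u v = m \<Longrightarrow> max u v = M \<Longrightarrow> k \<le> m \<Longrightarrow> m \<le> M \<Longrightarrow> m = max (min u v) (min (max u v) k)" for u v m M k :: real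
  by (auto simp: min_def max_def)
lemma h2: "max u v = m \<Longrightarrow> min u v = M \<Longrightarrow> M \<le> m \<Longrightarrow> m \<le> k \<Longrightarrow> m = max (min u v) (min (max u v) k)" for u v m M k :: real
  by (auto simp: min_def max_def)
lemma h3: "min u v = m \<Longrightarrow> max u v = M \<Longrightarrow> m \<le> M \<Longrightarrow> M \<le> k \<Longrightarrow> M = min (max u v) (max (min u v) k)" for u v m M k :: real
  by (auto simp: min_def max_def)
lemma h4: "max u v = m \<Longrightarrow> min u v = M \<Longrightarrow> M \<le> m \<Longrightarrow> k \<le> M \<Longrightarrow> M = min (max u v) (max (min u v) k)" for u v m M k :: real
  by (auto simp: min_def max_def)

lemma pw_min:
  fixes p c d B :: real
  assumes "\<bar>c\<bar> \<le> B" "\<bar>d\<bar> \<le> B"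
  shows "p * min c d = max (min (p*c) (p*d)) (min (max (p*c) (p*d)) (- (p*B)))"
proof (cases "p \<ge> 0")
  case True
  have "- (p*B) \<le> p * min c d"
    using assms True mult_left_mono[of "-B" "min c d" p] by (auto simp: abs_le_iff)
  moreover have "p * min c d \<le> p * max c d" using True by (intro mult_left_mono) auto
  ultimately show ?thesis by (rule h1[OF mm_le[OF True]])
next
  case False
  have "- (p*B) \<ge> p * min c d"
    using assms False mult_left_mono_neg[of "-B" "min c d" p] by (auto simp: abs_le_iff)
  moreover have "p * min c d \<ge> p * max c d" using False by (intro mult_left_mono_neg) auto
  ultimately show ?thesis by (intro h2[OF mm_ge[OF False]])
qed

lemma pw_max:
  fixes p c d B :: real
  assumes "\<bar>c\<bar> \<le> B" "\<bar>d\<bar> \<le> B"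
  shows "p * max c d = min (max (p*c) (p*d)) (max (min (p*c) (p*d)) (p*B))"
proof (cases "p \<ge> 0")
  case True
  have "p*B \<ge> p * max c d"
    using assms True mult_left_mono[of "max c d" B p] by (auto simp: abs_le_iff)
  moreover have "p * min c d \<le> p * max c d" using True by (intro mult_left_mono) auto
  ultimately show ?thesis by (intro h3[OF mm_le[OF True]])
next
  case False
  have "p*B \<le> p * max c d"
    using assms False mult_left_mono_neg[of "max c d" B p] by (auto simp: abs_le_iff)
  moreover have "p * min c d \<ge> p * max c d" using False by (intro mult_left_mono_neg) auto
  ultimately show ?thesis by (intro h4[OF mm_ge[OF False]])
qed
lemma a1: "\<bar>t\<bar> \<le> t*t + (1::real)"
proof (cases "\<bar>t\<bar> \<le> 1")
  case True then show ?thesis using zero_le_square[of t] by linarith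
next
  case False
  have "\<bar>t\<bar> * 1 \<le> \<bar>t\<bar> * \<bar>t\<bar>" using False by (intro mult_left_mono) auto
  then show ?thesis by simp
qed

lemma mb: "\<bar>a\<bar> \<le> (A::real) \<Longrightarrow> \<bar>b\<bar> \<le> B \<Longrightarrow> \<bar>min a b\<bar> \<le> A + B \<and> \<bar>max a b\<bar> \<le> A + B \<and> \<bar>a\<bar> \<le> A + B \<and> \<bar>b\<bar> \<le> A + B"
proof -
  assume "\<bar>a\<bar> \<le> A" "\<bar>b\<bar> \<le> B"
  moreover have "0 \<le> \<bar>a\<bar>" "0 \<le> \<bar>b\<bar>" by simp_all
  ultimately have "\<bar>a\<bar> \<le> A + B" "\<bar>b\<bar> \<le> A + B" by linarith+
  then show ?thesis by (simp add: min_def max_def)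
qed

lemma ISD_add: "f \<in> ISD n \<Longrightarrow> g \<in> ISD n \<Longrightarrow> (\<lambda>x. f x + g x) \<in> ISD n"
proof (induction f arbitrary: g rule: ISD.induct)
  case (poly p)
  have P: "p \<in> poly_fun n" by fact
  show ?case using poly.prems
  proof (induction g rule: ISD.induct)
    case (poly q)
    show ?case by (rule ISD.poly[OF poly_fun.add[OF P poly.hyps]])
  next
    case (min f g)
    have "(\<lambda>x. min (p x + f x) (p x + g x)) \<in> ISD n" by (rule ISD.min[OF min.IH])
    moreover have "(\<lambda>x. min (p x + f x) (p x + g x)) = (\<lambda>x. p x + min (f x) (g x))"
      by (auto simp: fun_eq_iff min_def)
    ultimately show ?case by simp
  next
    case (max f g)
    have "(\<lambda>x. max (p x + f x) (p x + g x)) \<in> ISD n" by (rule ISD.max[OF max.IH])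
    moreover have "(\<lambda>x. max (p x + f x) (p x + g x)) = (\<lambda>x. p x + max (f x) (g x))"
      by (auto simp: fun_eq_iff max_def)
    ultimately show ?case by simp
  qed
next
  case (min f1 f2)
  have "(\<lambda>x. min (f1 x + g x) (f2 x + g x)) \<in> ISD n"
    by (rule ISD.min[OF min.IH(1)[OF min.prems] min.IH(2)[OF min.prems]])
  moreover have "(\<lambda>x. min (f1 x + g x) (f2 x + g x)) = (\<lambda>x. min (f1 x) (f2 x) + g x)"
    by (auto simp: fun_eq_iff min_def)
  ultimately show ?case by simp
next
  case (max f1 f2)
  have "(\<lambda>x. max (f1 x + g x) (f2 x + g x)) \<in> ISD n"
    by (rule ISD.max[OF max.IH(1)[OF max.prems] max.IH(2)[OF max.prems]])
  moreover have "(\<lambda>x. max (f1 x + g x) (f2 x + g x)) = (\<lambda>x. max (f1 x) (f2 x) + g x)"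
    by (auto simp: fun_eq_iff max_def)
  ultimately show ?case by simp
qed

lemma poly_neg: "p \<in> poly_fun n \<Longrightarrow> (\<lambda>x. - p x) \<in> poly_fun n"
proof -
  assume "p \<in> poly_fun n"
  then have "(\<lambda>x. (-1) * p x) \<in> poly_fun n" by (rule poly_fun.mult[OF poly_fun.const])
  then show ?thesis by simp
qed

lemma ISD_neg: "f \<in> ISD n \<Longrightarrow> (\<lambda>x. - f x) \<in> ISD n"
proof (induction f rule: ISD.induct)
  case (poly p) then show ?case by (rule ISD.poly[OF poly_neg])
next
  case (min f g)
  have "(\<lambda>x. max (- f x) (- g x)) \<in> ISD n" by (rule ISD.max[OF min.IH])
  moreover have "(\<lambda>x. max (- f x) (- g x)) = (\<lambda>x. - min (f x) (g x))"
    by (simp add: fun_eq_iff max_def min_def)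
  ultimately show ?case by simp
next
  case (max f g)
  have "(\<lambda>x. min (- f x) (- g x)) \<in> ISD n" by (rule ISD.min[OF max.IH])
  moreover have "(\<lambda>x. min (- f x) (- g x)) = (\<lambda>x. - max (f x) (g x))"
    by (simp add: fun_eq_iff max_def min_def)
  ultimately show ?case by simp
qed

lemma ISD_bound: "f \<in> ISD n \<Longrightarrow> \<exists>B\<in>poly_fun n. \<forall>x. \<bar>f x\<bar> \<le> B x"
proof (induction f rule: ISD.induct)
  case (poly p)
  have "(\<lambda>x. p x * p x + 1) \<in> poly_fun n"
    by (rule poly_fun.add[OF poly_fun.mult[OF poly.hyps poly.hyps] poly_fun.const])
  moreover have "\<forall>x. \<bar>p x\<bar> \<le> p x * p x + 1" using a1 by (intro allI)
  ultimately show ?case by (intro bexI[of _ "\<lambda>x. p x * p x + 1"]) simp_all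
next
  case (min f g)
  obtain B1 where b1: "B1 \<in> poly_fun n" "\<forall>x. \<bar>f x\<bar> \<le> B1 x" using min.IH(1) by (elim bexE)
  obtain B2 where b2: "B2 \<in> poly_fun n" "\<forall>x. \<bar>g x\<bar> \<le> B2 x" using min.IH(2) by (elim bexE)
  note b = b1(1) b2(1) b1(2) b2(2)
  have "\<forall>x. \<bar>min (f x) (g x)\<bar> \<le> B1 x + B2 x \<and> \<bar>max (f x) (g x)\<bar> \<le> B1 x + B2 x"
  proof
    fix x show "\<bar>min (f x) (g x)\<bar> \<le> B1 x + B2 x \<and> \<bar>max (f x) (g x)\<bar> \<le> B1 x + B2 x"
      using mb[OF spec[OF b(3), of x] spec[OF b(4), of x]] by simp
  qed
  then show ?case using poly_fun.add[OF b(1,2)] by (intro bexI[of _ "\<lambda>x. B1 x + B2 x"]) simp_all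
next
  case (max f g)
  obtain B1 where b1: "B1 \<in> poly_fun n" "\<forall>x. \<bar>f x\<bar> \<le> B1 x" using max.IH(1) by (elim bexE)
  obtain B2 where b2: "B2 \<in> poly_fun n" "\<forall>x. \<bar>g x\<bar> \<le> B2 x" using max.IH(2) by (elim bexE)
  note b = b1(1) b2(1) b1(2) b2(2)
  have "\<forall>x. \<bar>min (f x) (g x)\<bar> \<le> B1 x + B2 x \<and> \<bar>max (f x) (g x)\<bar> \<le> B1 x + B2 x"
  proof
    fix x show "\<bar>min (f x) (g x)\<bar> \<le> B1 x + B2 x \<and> \<bar>max (f x) (g x)\<bar> \<le> B1 x + B2 x"
      using mb[OF spec[OF b(3), of x] spec[OF b(4), of x]] by simp
  qed
  then show ?case using poly_fun.add[OF b(1,2)] by (intro bexI[of _ "\<lambda>x. B1 x + B2 x"]) simp_all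
qed

lemma bound2:
  assumes "f \<in> ISD n" "g \<in> ISD n"
  shows "\<exists>B\<in>poly_fun n. \<forall>x. \<bar>f x\<bar> \<le> B x \<and> \<bar>g x\<bar> \<le> B x"
proof -
  obtain B1 where b1: "B1 \<in> poly_fun n" "\<forall>x. \<bar>f x\<bar> \<le> B1 x" using ISD_bound[OF assms(1)] by (elim bexE)
  obtain B2 where b2: "B2 \<in> poly_fun n" "\<forall>x. \<bar>g x\<bar> \<le> B2 x" using ISD_bound[OF assms(2)] by (elim bexE)
  have "\<forall>x. \<bar>f x\<bar> \<le> B1 x + B2 x \<and> \<bar>g x\<bar> \<le> B1 x + B2 x"
  proof
    fix x show "\<bar>f x\<bar> \<le> B1 x + B2 x \<and> \<bar>g x\<bar> \<le> B1 x + B2 x"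
      using mb[OF spec[OF b1(2), of x] spec[OF b2(2), of x]] by simp
  qed
  then show ?thesis using poly_fun.add[OF b1(1) b2(1)]
    by (intro bexI[of _ "\<lambda>x. B1 x + B2 x"]) simp_all
qed

lemma combine:
  assumes u: "u \<in> ISD n" and v: "v \<in> ISD n" and k: "k \<in> ISD n"
  shows "(\<lambda>x. max (min (u x) (v x)) (min (max (u x) (v x)) (k x))) \<in> ISD n"
    and "(\<lambda>x. min (max (u x) (v x)) (max (min (u x) (v x)) (k x))) \<in> ISD n"
  by (rule ISD.max[OF ISD.min[OF u v] ISD.min[OF ISD.max[OF u v] k]])
     (rule ISD.min[OF ISD.max[OF u v] ISD.max[OF ISD.min[OF u v] k]])

lemma ISD_mult_poly: "g \<in> ISD n \<Longrightarrow> p \<in> poly_fun n \<Longrightarrow> (\<lambda>x. p x * g x) \<in> ISD n"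
proof (induction g arbitrary: p rule: ISD.induct)
  case (poly q) show ?case by (rule ISD.poly[OF poly_fun.mult[OF poly.prems poly.hyps]])
next
  case (min c d)
  obtain B where B: "B \<in> poly_fun n" "\<forall>x. \<bar>c x\<bar> \<le> B x \<and> \<bar>d x\<bar> \<le> B x"
    using bound2[OF min.hyps] by (elim bexE)
  have K: "(\<lambda>x. - (p x * B x)) \<in> ISD n"
    by (rule ISD.poly[OF poly_neg[OF poly_fun.mult[OF min.prems B(1)]]])
  have "(\<lambda>x. max (min (p x * c x) (p x * d x)) (min (max (p x * c x) (p x * d x)) (- (p x * B x)))) \<in> ISD n"
    using combine(1)[OF min.IH(1)[OF min.prems] min.IH(2)[OF min.prems] K] by simp
  moreover have "(\<lambda>x. p x * min (c x) (d x)) = (\<lambda>x. max (min (p x * c x) (p x * d x)) (min (max (p x * c x) (p x * d x)) (- (p x * B x))))"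
    by (rule ext, rule pw_min) (use B(2) in simp)+
  ultimately show ?case by simp
next
  case (max c d)
  obtain B where B: "B \<in> poly_fun n" "\<forall>x. \<bar>c x\<bar> \<le> B x \<and> \<bar>d x\<bar> \<le> B x"
    using bound2[OF max.hyps] by (elim bexE)
  have K: "(\<lambda>x. p x * B x) \<in> ISD n"
    by (rule ISD.poly[OF poly_fun.mult[OF max.prems B(1)]])
  have "(\<lambda>x. min (max (p x * c x) (p x * d x)) (max (min (p x * c x) (p x * d x)) (p x * B x))) \<in> ISD n"
    using combine(2)[OF max.IH(1)[OF max.prems] max.IH(2)[OF max.prems] K] by simp
  moreover have "(\<lambda>x. p x * max (c x) (d x)) = (\<lambda>x. min (max (p x * c x) (p x * d x)) (max (min (p x * c x) (p x * d x)) (p x * B x)))"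
    by (rule ext, rule pw_max) (use B(2) in simp)+
  ultimately show ?case by simp
qed

lemma ISD_mult: "f \<in> ISD n \<Longrightarrow> g \<in> ISD n \<Longrightarrow> (\<lambda>x. f x * g x) \<in> ISD n"
proof (induction f arbitrary: g rule: ISD.induct)
  case (poly p) show ?case by (rule ISD_mult_poly[OF poly.prems poly.hyps])
next
  case (min c d)
  obtain B where B: "B \<in> poly_fun n" "\<forall>x. \<bar>c x\<bar> \<le> B x \<and> \<bar>d x\<bar> \<le> B x"
    using bound2[OF min.hyps] by (elim bexE)
  have K: "(\<lambda>x. - (B x * g x)) \<in> ISD n"
    by (rule ISD_neg[OF ISD_mult_poly[OF min.prems B(1)]])
  have eq: "(\<lambda>x. min (c x) (d x) * g x) = (\<lambda>x. max (min (c x * g x) (d x * g x)) (min (max (c x * g x) (d x * g x)) (- (B x * g x))))"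
  proof (rule ext)
    fix x
    have "g x * min (c x) (d x) = max (min (g x * c x) (g x * d x)) (min (max (g x * c x) (g x * d x)) (- (g x * B x)))"
      by (rule pw_min) (use B(2) in simp)+
    then show "min (c x) (d x) * g x = max (min (c x * g x) (d x * g x)) (min (max (c x * g x) (d x * g x)) (- (B x * g x)))"
      by (simp only: mult.commute)
  qed
  show ?case unfolding eq by (rule combine(1)[OF min.IH(1)[OF min.prems] min.IH(2)[OF min.prems] K])
next
  case (max c d)
  obtain B where B: "B \<in> poly_fun n" "\<forall>x. \<bar>c x\<bar> \<le> B x \<and> \<bar>d x\<bar> \<le> B x"
    using bound2[OF max.hyps] by (elim bexE)
  have K: "(\<lambda>x. B x * g x) \<in> ISD n"
    by (rule ISD_mult_poly[OF max.prems B(1)])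
  have eq: "(\<lambda>x. max (c x) (d x) * g x) = (\<lambda>x. min (max (c x * g x) (d x * g x)) (max (min (c x * g x) (d x * g x)) (B x * g x)))"
  proof (rule ext)
    fix x
    have "g x * max (c x) (d x) = min (max (g x * c x) (g x * d x)) (max (min (g x * c x) (g x * d x)) (g x * B x))"
      by (rule pw_max) (use B(2) in simp)+
    then show "max (c x) (d x) * g x = min (max (c x * g x) (d x * g x)) (max (min (c x * g x) (d x * g x)) (B x * g x))"
      by (simp only: mult.commute)
  qed
  show ?case unfolding eq by (rule combine(2)[OF max.IH(1)[OF max.prems] max.IH(2)[OF max.prems] K])
qed

lemma lring: "l_ring (ISD n) (\<lambda>f g x. f x + g x) (\<lambda>f g x. f x * g x) (\<lambda>x. 0) (\<lambda>x. 1)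
           (\<lambda>f x. - f x) (\<lambda>f g x. min (f x) (g x)) (\<lambda>f g x. max (f x) (g x))"
  unfolding l_ring_def
proof (intro conjI)
  show "(\<lambda>x. 0::real) \<in> ISD n" "(\<lambda>x. 1::real) \<in> ISD n"
    by (rule ISD.poly[OF poly_fun.const])+
  show "\<forall>f\<in>ISD n. (\<lambda>x. - f x) \<in> ISD n" by (intro ballI ISD_neg)
  show "\<forall>f\<in>ISD n. \<forall>g\<in>ISD n. (\<lambda>x. f x + g x) \<in> ISD n \<and> (\<lambda>x. f x * g x) \<in> ISD n \<and>
     (\<lambda>x. min (f x) (g x)) \<in> ISD n \<and> (\<lambda>x. max (f x) (g x)) \<in> ISD n"
  proof (intro ballI conjI)
    fix f g assume f: "f \<in> ISD n" and g: "g \<in> ISD n"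
    show "(\<lambda>x. f x + g x) \<in> ISD n" by (rule ISD_add[OF f g])
    show "(\<lambda>x. f x * g x) \<in> ISD n" by (rule ISD_mult[OF f g])
    show "(\<lambda>x. min (f x) (g x)) \<in> ISD n" by (rule ISD.min[OF f g])
    show "(\<lambda>x. max (f x) (g x)) \<in> ISD n" by (rule ISD.max[OF f g])
  qed
  show "\<forall>f\<in>ISD n. \<forall>g\<in>ISD n. \<forall>h\<in>ISD n. (\<lambda>x. f x + g x + h x) = (\<lambda>x. f x + (g x + h x))"
    by (simp add: add.assoc)
  show "\<forall>f\<in>ISD n. \<forall>g\<in>ISD n. (\<lambda>x. f x + g x) = (\<lambda>x. g x + f x)" by (simp add: add.commute)
  show "\<forall>f\<in>ISD n. (\<lambda>x. 0 + f x) = f" by simp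
  show "\<forall>f\<in>ISD n. (\<lambda>x. - f x + f x) = (\<lambda>x. 0)" by simp
  show "\<forall>f\<in>ISD n. \<forall>g\<in>ISD n. \<forall>h\<in>ISD n. (\<lambda>x. f x * g x * h x) = (\<lambda>x. f x * (g x * h x))"
    by (simp add: mult.assoc)
  show "\<forall>f\<in>ISD n. (\<lambda>x. 1 * f x) = f \<and> (\<lambda>x. f x * 1) = f" by simp
  show "\<forall>f\<in>ISD n. \<forall>g\<in>ISD n. \<forall>h\<in>ISD n. (\<lambda>x. f x * (g x + h x)) = (\<lambda>x. f x * g x + f x * h x) \<and>
      (\<lambda>x. (f x + g x) * h x) = (\<lambda>x. f x * h x + g x * h x)"
    by (simp add: distrib_left distrib_right)
  show "\<forall>f\<in>ISD n. \<forall>g\<in>ISD n. (\<lambda>x. min (f x) (g x)) = (\<lambda>x. min (g x) (f x)) \<and>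
      (\<lambda>x. max (f x) (g x)) = (\<lambda>x. max (g x) (f x))"
    by (simp add: min.commute max.commute)
  show "\<forall>f\<in>ISD n. \<forall>g\<in>ISD n. \<forall>h\<in>ISD n. (\<lambda>x. min (min (f x) (g x)) (h x)) = (\<lambda>x. min (f x) (min (g x) (h x))) \<and>
      (\<lambda>x. max (max (f x) (g x)) (h x)) = (\<lambda>x. max (f x) (max (g x) (h x)))"
    by (simp add: min.assoc max.assoc)
  show "\<forall>f\<in>ISD n. \<forall>g\<in>ISD n. (\<lambda>x. min (f x) (max (f x) (g x))) = f \<and> (\<lambda>x. max (f x) (min (f x) (g x))) = f"
    by simp
  show "\<forall>f\<in>ISD n. \<forall>g\<in>ISD n. \<forall>h\<in>ISD n. (\<lambda>x. min (f x) (g x)) = f \<longrightarrow>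
      (\<lambda>x. min (h x + f x) (h x + g x)) = (\<lambda>x. h x + f x)"
  proof (intro ballI impI ext)
    fix f g h :: "(nat\<Rightarrow>real)\<Rightarrow>real" and x
    assume a: "(\<lambda>x. min (f x) (g x)) = f"
    have "min (f x) (g x) = f x" using fun_cong[OF a, of x] by simp
    then show "min (h x + f x) (h x + g x) = h x + f x" by (metis add_le_cancel_left min.absorb_iff1)
  qed
  show "\<forall>f\<in>ISD n. \<forall>g\<in>ISD n. (\<lambda>x. min 0 (f x)) = (\<lambda>x. 0::real) \<and> (\<lambda>x. min 0 (g x)) = (\<lambda>x. 0) \<longrightarrow>
      (\<lambda>x. min 0 (f x * g x)) = (\<lambda>x. 0)"
  proof (intro ballI impI ext)
    fix f g :: "(nat\<Rightarrow>real)\<Rightarrow>real" and x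
    assume a: "(\<lambda>x. min 0 (f x)) = (\<lambda>x. 0::real) \<and> (\<lambda>x. min 0 (g x)) = (\<lambda>x. 0)"
    have "min 0 (f x) = 0" "min 0 (g x) = 0" using fun_cong[OF conjunct1[OF a], of x] fun_cong[OF conjunct2[OF a], of x] by simp_all
    then show "min 0 (f x * g x) = 0" by (simp add: min_def split: if_splits)
  qed
qed

lemma fprop: "\<forall>f\<in>ISD n. \<forall>g\<in>ISD n. \<forall>h\<in>ISD n.
      (\<lambda>x. min 0 (f x)) = (\<lambda>x. 0::real) \<and> (\<lambda>x. min 0 (g x)) = (\<lambda>x. 0) \<and> (\<lambda>x. min 0 (h x)) = (\<lambda>x. 0)
      \<and> (\<lambda>x. min (g x) (h x)) = (\<lambda>x. 0) \<longrightarrow>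
      (\<lambda>x. min (f x * g x) (h x)) = (\<lambda>x. 0) \<and> (\<lambda>x. min (g x * f x) (h x)) = (\<lambda>x. 0)"
proof (intro ballI impI conjI ext)
  fix f g h :: "(nat\<Rightarrow>real)\<Rightarrow>real" and x
  assume a: "(\<lambda>x. min 0 (f x)) = (\<lambda>x. 0::real) \<and> (\<lambda>x. min 0 (g x)) = (\<lambda>x. 0) \<and> (\<lambda>x. min 0 (h x)) = (\<lambda>x. 0)
      \<and> (\<lambda>x. min (g x) (h x)) = (\<lambda>x. 0)"
  have b: "min 0 (f x) = 0" "min 0 (g x) = 0" "min 0 (h x) = 0" "min (g x) (h x) = 0"
    using a by (simp_all add: fun_eq_iff)
  then have "f x \<ge> 0" "g x \<ge> 0" "h x \<ge> 0" "g x = 0 \<or> h x = 0" by (simp_all add: min_def split: if_splits)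
  then show "min (f x * g x) (h x) = 0" "min (g x * f x) (h x) = 0" by auto
qed

theorem mainTheorem7:
  fixes n :: nat
  shows "f_ring (ISD n) (\<lambda>f g x. f x + g x) (\<lambda>f g x. f x * g x) (\<lambda>x. 0) (\<lambda>x. 1)
           (\<lambda>f x. - f x) (\<lambda>f g x. min (f x) (g x)) (\<lambda>f g x. max (f x) (g x))
         \<and> (\<forall>f\<in>ISD n. \<forall>g\<in>ISD n. (\<lambda>x. f x + g x) \<in> ISD n \<and> (\<lambda>x. f x * g x) \<in> ISD n)"
  unfolding f_ring_def
proof (intro conjI)
  show "l_ring (ISD n) (\<lambda>f g x. f x + g x) (\<lambda>f g x. f x * g x) (\<lambda>x. 0) (\<lambda>x. 1)
           (\<lambda>f x. - f x) (\<lambda>f g x. min (f x) (g x)) (\<lambda>f g x. max (f x) (g x))" by (rule lring)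
  show "\<forall>f\<in>ISD n. \<forall>g\<in>ISD n. \<forall>h\<in>ISD n.
      (\<lambda>x. min 0 (f x)) = (\<lambda>x. 0::real) \<and> (\<lambda>x. min 0 (g x)) = (\<lambda>x. 0) \<and> (\<lambda>x. min 0 (h x)) = (\<lambda>x. 0)
      \<and> (\<lambda>x. min (g x) (h x)) = (\<lambda>x. 0) \<longrightarrow>
      (\<lambda>x. min (f x * g x) (h x)) = (\<lambda>x. 0) \<and> (\<lambda>x. min (g x * f x) (h x)) = (\<lambda>x. 0)"
    by (rule fprop)
  show "\<forall>f\<in>ISD n. \<forall>g\<in>ISD n. (\<lambda>x. f x + g x) \<in> ISD n \<and> (\<lambda>x. f x * g x) \<in> ISD n"
  proof (intro ballI conjI)
    fix f g assume f: "f \<in> ISD n" and g: "g \<in> ISD n"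
    show "(\<lambda>x. f x + g x) \<in> ISD n" by (rule ISD_add[OF f g])
    show "(\<lambda>x. f x * g x) \<in> ISD n" by (rule ISD_mult[OF f g])
  qed
qed

end
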